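(* Let $n\ge 3$ and for $i=1,2$ let $f_i(x,y_0,\dots,y_n)$ be smooth with $\frac{\partial^2 f_i}{\partial y_n^2}\neq0$, and let $D_i$ be the rank 2 distribution on (an open subset of) $J^n(\mathbb R,\mathbb R)\times\mathbb R$ spanned by $\frac{\partial}{\partial x}+\sum_{k=0}^{n-1}y_{k+1}\frac{\partial}{\partial y_k}+f_i\frac{\partial}{\partial z}$ and $\frac{\partial}{\partial y_n}$. Let $\phi$ be a local diffeomorphism with $\phi_*D_1=D_2$ of the form $$\phi(p,z)=(\psi(p),\ \alpha z+\mu(p)),\qquad p\in J^n(\mathbb R,\mathbb R),$$ where $\psi$ is a local diffeomorphism of $J^n(\mathbb R,\mathbb R)$, $\alpha\in\mathbb R\setminus\{0\}$ and $\mu$ is a smooth function on $J^n(\mathbb R,\mathbb R)$. Then $\psi$ is a contact transformation of $J^n(\mathbb R,\mathbb R)$, and $\mu$ does not depend on $y_n$ (i.e. $\mu$ is the pull-back of a function on $J^{n-1}(\mathbb R,\mathbb R)$).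
   Context: Coordinates on $J^n(\mathbb R,\mathbb R)$ are $(x,y_0,\dots,y_n)$. A contact transformation of $J^n(\mathbb R,\mathbb R)$ is a (local) diffeomorphism preserving the contact (Cartan) distribution $\{\theta_0=\dots=\theta_{n-1}=0\}$, where $\theta_k=dy_k-y_{k+1}\,dx$. *)

theory Defs
  imports "HOL-Analysis.Analysis"
begin

text \<open>Points of J^n(R,R) are pairs (x, y) with x :: real and y :: real^'n, where
  the coordinates y_0, ..., y_n are y $ e 0, ..., y $ e n for a fixed bijection
  e : {0..n} -> 'n (so CARD('n) = n+1).\<close>

fun Ck_on :: "nat \<Rightarrow> 'a::real_normed_vector set \<Rightarrow> ('a \<Rightarrow> 'b::real_normed_vector) \<Rightarrow> bool" where
  "Ck_on 0 S f = continuous_on S f"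
| "Ck_on (Suc k) S f =
     (\<exists>f'. (\<forall>x\<in>S. (f has_derivative f' x) (at x)) \<and> (\<forall>v. Ck_on k S (\<lambda>x. f' x v)))"

definition smooth_on :: "'a::real_normed_vector set \<Rightarrow> ('a \<Rightarrow> 'b::real_normed_vector) \<Rightarrow> bool" where
  "smooth_on S f \<longleftrightarrow> (\<forall>k. Ck_on k S f)"

definition local_diffeo_on :: "'a::euclidean_space set \<Rightarrow> ('a \<Rightarrow> 'a) \<Rightarrow> bool" where
  "local_diffeo_on S g \<longleftrightarrow> open S \<and> smooth_on S g \<and> (\<forall>x\<in>S. bij (frechet_derivative g (at x)))"

definition pderiv_dir :: "'a::real_normed_vector \<Rightarrow> ('a \<Rightarrow> 'b::real_normed_vector) \<Rightarrow> 'a \<Rightarrow> 'b" where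
  "pderiv_dir v f p = frechet_derivative f (at p) v"

definition dyn :: "(nat \<Rightarrow> 'n::finite) \<Rightarrow> nat \<Rightarrow> real \<times> (real^'n)" where
  "dyn e n = (0, axis (e n) 1)"

text \<open>Total derivative part d/dx + sum_{k<n} y_{k+1} d/dy_k at p = (x,y).\<close>
definition totder :: "(nat \<Rightarrow> 'n::finite) \<Rightarrow> nat \<Rightarrow> real \<times> (real^'n) \<Rightarrow> real \<times> (real^'n)" where
  "totder e n p = (1, \<chi> j. (let k = inv_into {..n} e j in if k < n then (snd p) $ e (Suc k) else 0))"

definition Xfield :: "(nat \<Rightarrow> 'n::finite) \<Rightarrow> nat \<Rightarrow> (real \<times> (real^'n) \<Rightarrow> real)
     \<Rightarrow> (real \<times> (real^'n)) \<times> real \<Rightarrow> (real \<times> (real^'n)) \<times> real" where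
  "Xfield e n f q = (totder e n (fst q), f (fst q))"

definition Yfield :: "(nat \<Rightarrow> 'n::finite) \<Rightarrow> nat \<Rightarrow> (real \<times> (real^'n)) \<times> real" where
  "Yfield e n = (dyn e n, 0)"

definition Dist :: "(nat \<Rightarrow> 'n::finite) \<Rightarrow> nat \<Rightarrow> (real \<times> (real^'n) \<Rightarrow> real)
     \<Rightarrow> (real \<times> (real^'n)) \<times> real \<Rightarrow> ((real \<times> (real^'n)) \<times> real) set" where
  "Dist e n f q = span {Xfield e n f q, Yfield e n}"

text \<open>Contact (Cartan) distribution at p = (x,y): theta_k = dy_k - y_{k+1} dx = 0 for k < n.\<close>
definition contact_dist :: "(nat \<Rightarrow> 'n::finite) \<Rightarrow> nat \<Rightarrow> real \<times> (real^'n) \<Rightarrow> (real \<times> (real^'n)) set" where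
  "contact_dist e n p = {(dx, dy). \<forall>k<n. dy $ e k = (snd p) $ e (Suc k) * dx}"

definition contact_transformation_on ::
    "(nat \<Rightarrow> 'n::finite) \<Rightarrow> nat \<Rightarrow> (real \<times> (real^'n)) set \<Rightarrow> (real \<times> (real^'n) \<Rightarrow> real \<times> (real^'n)) \<Rightarrow> bool" where
  "contact_transformation_on e n V \<psi> \<longleftrightarrow> local_diffeo_on V \<psi> \<and>
     (\<forall>p\<in>V. frechet_derivative \<psi> (at p) ` contact_dist e n p = contact_dist e n (\<psi> p))"

end

theory Submission
  imports Defs
begin

lemma fd_local:
  assumes "open V" "p \<in> V" "\<forall>q\<in>V. F q = G q"
  shows "frechet_derivative F (at p) = frechet_derivative G (at p)"
proof -
  have "\<And>D. (F has_derivative D) (at p) \<longleftrightarrow> (G has_derivative D) (at p)"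
    using has_derivative_transform_within_open assms by (metis (no_types, lifting))
  then show ?thesis unfolding frechet_derivative_def by simp
qed

lemma pd_local:
  assumes "open V" "p \<in> V" "\<forall>q\<in>V. F q = G q"
  shows "pderiv_dir v F p = pderiv_dir v G p"
  using fd_local[OF assms] by (simp add: pderiv_dir_def)

lemma pd_zero:
  assumes "open V" "p \<in> V" "\<forall>q\<in>V. F q = 0"
  shows "pderiv_dir v F p = 0"
proof -
  have "pderiv_dir v F p = pderiv_dir v (\<lambda>_. 0::'b::real_normed_vector) p"
    using assms by (intro pd_local[of V]) auto
  also have "\<dots> = 0"
    unfolding pderiv_dir_def
    using frechet_derivative_at[OF has_derivative_const[of "0::'b" "at p"]] by simp
  finally show ?thesis .
qed

lemma Ck_cong:
  assumes "Ck_on k V f" "open V" "\<forall>x\<in>V. f x = g x"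
  shows "Ck_on k V g"
  using assms
proof (induction k arbitrary: f g)
  case 0
  then show ?case using continuous_on_cong by force
next
  case (Suc k)
  then obtain f' where f': "\<forall>x\<in>V. (f has_derivative f' x) (at x)" "\<forall>v. Ck_on k V (\<lambda>x. f' x v)"
    by auto
  have "\<forall>x\<in>V. (g has_derivative f' x) (at x)"
    using f'(1) Suc.prems has_derivative_transform_within_open by metis
  then show ?case using f'(2) by auto
qed

lemma Ck_deriv:
  assumes "open V" "Ck_on (Suc k) V f"
  shows "Ck_on k V (pderiv_dir v f)"
proof -
  obtain f' where f': "\<forall>x\<in>V. (f has_derivative f' x) (at x)" "\<forall>v. Ck_on k V (\<lambda>x. f' x v)"
    using assms by auto
  have "\<forall>x\<in>V. f' x v = pderiv_dir v f x"
    using f'(1) frechet_derivative_at unfolding pderiv_dir_def by metis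
  then show ?thesis using Ck_cong f'(2) assms(1) by blast
qed

lemma smooth_deriv:
  assumes "open V" "smooth_on V f"
  shows "smooth_on V (pderiv_dir v f)"
  using assms Ck_deriv unfolding smooth_on_def by blast

lemma smooth_hasder:
  assumes "smooth_on V f" "p \<in> V"
  shows "(f has_derivative frechet_derivative f (at p)) (at p)"
proof -
  have "Ck_on (Suc 0) V f" using assms unfolding smooth_on_def by blast
  then obtain f' where "\<forall>x\<in>V. (f has_derivative f' x) (at x)" by auto
  then show ?thesis using assms(2) frechet_derivative_at by metis
qed

lemma smooth_diff:
  assumes "smooth_on V f" "p \<in> V"
  shows "f differentiable (at p)"
  using smooth_hasder[OF assms] differentiable_def by blast

lemma smooth_lin:
  assumes "smooth_on V f" "p \<in> V"
  shows "linear (frechet_derivative f (at p))"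
  using smooth_hasder[OF assms] has_derivative_linear by blast

lemma smooth_cont:
  assumes "smooth_on V f"
  shows "continuous_on V f"
  using assms unfolding smooth_on_def by (metis Ck_on.simps(1))

lemma Ck_linear:
  assumes "bounded_linear l" "Ck_on k V f"
  shows "Ck_on k V (\<lambda>x. l (f x))"
  using assms(2)
proof (induction k arbitrary: f)
  case 0
  then show ?case
    using continuous_on_compose[of V f l] linear_continuous_on[OF assms(1)]
    by (simp add: o_def)
next
  case (Suc k)
  then obtain f' where f': "\<forall>x\<in>V. (f has_derivative f' x) (at x)" "\<forall>v. Ck_on k V (\<lambda>x. f' x v)"
    by auto
  have "\<forall>x\<in>V. ((\<lambda>x. l (f x)) has_derivative (\<lambda>h. l (f' x h))) (at x)"
    using f'(1) bounded_linear.has_derivative[OF assms(1)] by blast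
  then show ?case using f'(2) Suc.IH by auto
qed

lemma smooth_linear:
  assumes "bounded_linear l" "smooth_on V f"
  shows "smooth_on V (\<lambda>x. l (f x))"
  using assms Ck_linear unfolding smooth_on_def by blast


lemma line_deriv:
  fixes g :: "'a::real_normed_vector \<Rightarrow> real"
  assumes "g differentiable (at (a + s *\<^sub>R w))"
  shows "((\<lambda>t. g (a + t *\<^sub>R w)) has_real_derivative pderiv_dir w g (a + s *\<^sub>R w)) (at s)"
proof -
  let ?G = "frechet_derivative g (at (a + s *\<^sub>R w))"
  have g: "(g has_derivative ?G) (at (a + s *\<^sub>R w))"
    using assms frechet_derivative_works by blast
  have lin: "linear ?G" using g has_derivative_linear by blast
  have i: "((\<lambda>t. a + t *\<^sub>R w) has_derivative (\<lambda>h. h *\<^sub>R w)) (at s)"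
    by (auto intro!: derivative_eq_intros)
  have "((\<lambda>t. g (a + t *\<^sub>R w)) has_derivative (\<lambda>h. ?G (h *\<^sub>R w))) (at s)"
    using has_derivative_compose[OF i g] by simp
  moreover have "(\<lambda>h. ?G (h *\<^sub>R w)) = (\<lambda>h. pderiv_dir w g (a + s *\<^sub>R w) * h)"
    using linear_scale[OF lin] by (auto simp: pderiv_dir_def)
  ultimately show ?thesis unfolding has_field_derivative_def by simp
qed

lemma mixed_mvt:
  fixes g :: "'a::real_normed_vector \<Rightarrow> real"
  assumes V: "open V" and sm: "smooth_on V g" and s: "s > 0"
    and inV: "\<forall>\<sigma>\<in>{0..s}. \<forall>\<tau>\<in>{0..s}. p + \<sigma> *\<^sub>R u + \<tau> *\<^sub>R v \<in> V"
  shows "\<exists>\<sigma> \<tau>. 0 < \<sigma> \<and> \<sigma> < s \<and> 0 < \<tau> \<and> \<tau> < s \<and>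
    g (p + s *\<^sub>R u + s *\<^sub>R v) - g (p + s *\<^sub>R u) - g (p + s *\<^sub>R v) + g p
      = s * s * pderiv_dir v (pderiv_dir u g) (p + \<sigma> *\<^sub>R u + \<tau> *\<^sub>R v)"
proof -
  have smu: "smooth_on V (pderiv_dir u g)" using smooth_deriv[OF V sm] .
  define \<phi> where "\<phi> = (\<lambda>\<sigma>. g ((p + s *\<^sub>R v) + \<sigma> *\<^sub>R u) - g (p + \<sigma> *\<^sub>R u))"
  have dphi: "DERIV \<phi> \<sigma> :> pderiv_dir u g ((p + s *\<^sub>R v) + \<sigma> *\<^sub>R u) - pderiv_dir u g (p + \<sigma> *\<^sub>R u)"
    if "0 \<le> \<sigma>" "\<sigma> \<le> s" for \<sigma>
  proof -
    have eq: "(p + s *\<^sub>R v) + \<sigma> *\<^sub>R u = p + \<sigma> *\<^sub>R u + s *\<^sub>R v"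
      by (simp add: algebra_simps)
    have a: "(p + s *\<^sub>R v) + \<sigma> *\<^sub>R u \<in> V"
      unfolding eq using inV[rule_format, of \<sigma> s] that s by simp
    have b: "p + \<sigma> *\<^sub>R u \<in> V"
      using inV[rule_format, of \<sigma> 0] that s by simp
    show ?thesis unfolding \<phi>_def
      by (intro DERIV_diff line_deriv smooth_diff[OF sm] a b)
  qed
  obtain \<sigma> where \<sigma>: "0 < \<sigma>" "\<sigma> < s"
    "\<phi> s - \<phi> 0 = (s - 0) * (pderiv_dir u g ((p + s *\<^sub>R v) + \<sigma> *\<^sub>R u) - pderiv_dir u g (p + \<sigma> *\<^sub>R u))"
    using MVT2[OF s dphi] by auto
  define chi where "chi = (\<lambda>\<tau>. pderiv_dir u g ((p + \<sigma> *\<^sub>R u) + \<tau> *\<^sub>R v))"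
  have dchi: "DERIV chi \<tau> :> pderiv_dir v (pderiv_dir u g) ((p + \<sigma> *\<^sub>R u) + \<tau> *\<^sub>R v)"
    if "0 \<le> \<tau>" "\<tau> \<le> s" for \<tau>
  proof -
    have a: "(p + \<sigma> *\<^sub>R u) + \<tau> *\<^sub>R v \<in> V"
      using inV[rule_format, of \<sigma> \<tau>] that \<sigma> by simp
    show ?thesis unfolding chi_def
      by (intro line_deriv smooth_diff[OF smu] a)
  qed
  obtain \<tau> where \<tau>: "0 < \<tau>" "\<tau> < s"
    "chi s - chi 0 = (s - 0) * pderiv_dir v (pderiv_dir u g) ((p + \<sigma> *\<^sub>R u) + \<tau> *\<^sub>R v)"
    using MVT2[OF s dchi] by auto
  have e1: "\<phi> s - \<phi> 0 = g (p + s *\<^sub>R u + s *\<^sub>R v) - g (p + s *\<^sub>R u) - g (p + s *\<^sub>R v) + g p"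
    unfolding \<phi>_def by (simp add: algebra_simps)
  have e2: "pderiv_dir u g ((p + s *\<^sub>R v) + \<sigma> *\<^sub>R u) - pderiv_dir u g (p + \<sigma> *\<^sub>R u) = chi s - chi 0"
    unfolding chi_def by (simp add: algebra_simps)
  show ?thesis
    using \<sigma> \<tau> e1 e2 by (intro exI[of _ \<sigma>] exI[of _ \<tau>]) (simp add: algebra_simps)
qed


lemma sym2:
  fixes g :: "'a::real_normed_vector \<Rightarrow> real"
  assumes V: "open V" "p \<in> V" and sm: "smooth_on V g"
  shows "pderiv_dir u (pderiv_dir v g) p = pderiv_dir v (pderiv_dir u g) p"
proof (rule ccontr)
  define A where "A = pderiv_dir u (pderiv_dir v g)"
  define B where "B = pderiv_dir v (pderiv_dir u g)"
  assume ne: "pderiv_dir u (pderiv_dir v g) p \<noteq> pderiv_dir v (pderiv_dir u g) p"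
  define \<epsilon> where "\<epsilon> = \<bar>A p - B p\<bar> / 2"
  have \<epsilon>: "\<epsilon> > 0" using ne unfolding \<epsilon>_def A_def B_def by simp
  have cA: "continuous (at p) A"
    using smooth_cont[OF smooth_deriv[OF V(1) smooth_deriv[OF V(1) sm]]] V
    unfolding A_def by (simp add: continuous_on_eq_continuous_at)
  have cB: "continuous (at p) B"
    using smooth_cont[OF smooth_deriv[OF V(1) smooth_deriv[OF V(1) sm]]] V
    unfolding B_def by (simp add: continuous_on_eq_continuous_at)
  obtain dA where dA: "dA > 0" "\<forall>q. dist q p < dA \<longrightarrow> dist (A q) (A p) < \<epsilon>"
    using cA \<epsilon> unfolding continuous_at_eps_delta by blast
  obtain dB where dB: "dB > 0" "\<forall>q. dist q p < dB \<longrightarrow> dist (B q) (B p) < \<epsilon>"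
    using cB \<epsilon> unfolding continuous_at_eps_delta by blast
  obtain r where r: "r > 0" "ball p r \<subseteq> V"
    using V openE by blast
  define c where "c = norm u + norm v + 1"
  have c: "c > 0" unfolding c_def by (simp add: add_nonneg_pos)
  define s where "s = min r (min dA dB) / (2 * c)"
  have s: "s > 0" unfolding s_def using r dA dB c by simp
  have sc: "s * c < min r (min dA dB)"
  proof -
    have "s * c = min r (min dA dB) / 2" unfolding s_def using c by simp
    then show ?thesis using r dA dB by linarith
  qed
  have near: "dist (p + \<sigma> *\<^sub>R u + \<tau> *\<^sub>R v) p < min r (min dA dB)"
    if "\<sigma> \<in> {0..s}" "\<tau> \<in> {0..s}" for \<sigma> \<tau>
  proof -
    have "dist (p + \<sigma> *\<^sub>R u + \<tau> *\<^sub>R v) p = norm (\<sigma> *\<^sub>R u + \<tau> *\<^sub>R v)"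
      by (simp add: dist_norm)
    also have "\<dots> \<le> \<sigma> * norm u + \<tau> * norm v"
      using that norm_triangle_ineq[of "\<sigma> *\<^sub>R u" "\<tau> *\<^sub>R v"] by simp
    also have "\<dots> \<le> s * norm u + s * norm v"
      using that by (intro add_mono mult_right_mono) auto
    also have "\<dots> \<le> s * c" using s unfolding c_def by (simp add: algebra_simps)
    finally show ?thesis using sc by linarith
  qed
  have inV1: "\<forall>\<sigma>\<in>{0..s}. \<forall>\<tau>\<in>{0..s}. p + \<sigma> *\<^sub>R u + \<tau> *\<^sub>R v \<in> V"
    using near r by (auto simp: dist_commute subset_iff)
  have inV2: "\<forall>\<sigma>\<in>{0..s}. \<forall>\<tau>\<in>{0..s}. p + \<sigma> *\<^sub>R v + \<tau> *\<^sub>R u \<in> V"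
    using inV1 by (metis add.assoc add.commute)
  obtain \<sigma>1 \<tau>1 where 1: "0 < \<sigma>1" "\<sigma>1 < s" "0 < \<tau>1" "\<tau>1 < s"
    "g (p + s *\<^sub>R u + s *\<^sub>R v) - g (p + s *\<^sub>R u) - g (p + s *\<^sub>R v) + g p
      = s * s * B (p + \<sigma>1 *\<^sub>R u + \<tau>1 *\<^sub>R v)"
    using mixed_mvt[OF V(1) sm s inV1] unfolding B_def by blast
  obtain \<sigma>2 \<tau>2 where 2: "0 < \<sigma>2" "\<sigma>2 < s" "0 < \<tau>2" "\<tau>2 < s"
    "g (p + s *\<^sub>R v + s *\<^sub>R u) - g (p + s *\<^sub>R v) - g (p + s *\<^sub>R u) + g p
      = s * s * A (p + \<sigma>2 *\<^sub>R v + \<tau>2 *\<^sub>R u)"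
    using mixed_mvt[OF V(1) sm s inV2] unfolding A_def by blast
  have peq: "p + s *\<^sub>R v + s *\<^sub>R u = p + s *\<^sub>R u + s *\<^sub>R v" by (simp add: algebra_simps)
  have "s * s * B (p + \<sigma>1 *\<^sub>R u + \<tau>1 *\<^sub>R v) = s * s * A (p + \<sigma>2 *\<^sub>R v + \<tau>2 *\<^sub>R u)"
    using 1(5) 2(5)[unfolded peq] by linarith
  then have eqAB: "B (p + \<sigma>1 *\<^sub>R u + \<tau>1 *\<^sub>R v) = A (p + \<tau>2 *\<^sub>R u + \<sigma>2 *\<^sub>R v)"
    using s by (simp add: algebra_simps)
  have n1: "dist (p + \<sigma>1 *\<^sub>R u + \<tau>1 *\<^sub>R v) p < dB" using near[of \<sigma>1 \<tau>1] 1 by auto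
  have n2: "dist (p + \<tau>2 *\<^sub>R u + \<sigma>2 *\<^sub>R v) p < dA" using near[of \<tau>2 \<sigma>2] 2 by auto
  have "\<bar>A p - B p\<bar> < 2 * \<epsilon>"
    using dA(2)[rule_format, OF n2] dB(2)[rule_format, OF n1] eqAB
    by (simp add: dist_real_def)
  then show False unfolding \<epsilon>_def by simp
qed


lemma pd_lin_comp:
  assumes "bounded_linear l" "f differentiable (at p)"
  shows "pderiv_dir v (\<lambda>q. l (f q)) p = l (pderiv_dir v f p)"
proof -
  have "((\<lambda>q. l (f q)) has_derivative (\<lambda>h. l (frechet_derivative f (at p) h))) (at p)"
    using bounded_linear.has_derivative[OF assms(1)] assms(2) frechet_derivative_works by blast
  then show ?thesis unfolding pderiv_dir_def using frechet_derivative_at by metis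
qed

lemma pd_diff:
  fixes f g :: "'a::real_normed_vector \<Rightarrow> real"
  assumes "f differentiable (at p)" "g differentiable (at p)"
  shows "pderiv_dir v (\<lambda>q. f q - g q) p = pderiv_dir v f p - pderiv_dir v g p"
proof -
  have "((\<lambda>q. f q - g q) has_derivative (\<lambda>h. frechet_derivative f (at p) h - frechet_derivative g (at p) h)) (at p)"
    using assms frechet_derivative_works has_derivative_diff by blast
  then show ?thesis unfolding pderiv_dir_def using frechet_derivative_at by metis
qed

lemma pd_mult:
  fixes f g :: "'a::real_normed_vector \<Rightarrow> real"
  assumes "f differentiable (at p)" "g differentiable (at p)"
  shows "pderiv_dir v (\<lambda>q. f q * g q) p = f p * pderiv_dir v g p + pderiv_dir v f p * g p"
proof -
  have "((\<lambda>q. f q * g q) has_derivative (\<lambda>h. f p * frechet_derivative g (at p) h + frechet_derivative f (at p) h * g p)) (at p)"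
    using assms frechet_derivative_works has_derivative_mult by blast
  then show ?thesis unfolding pderiv_dir_def using frechet_derivative_at by metis
qed

lemma diff_mult:
  fixes f g :: "'a::real_normed_vector \<Rightarrow> real"
  assumes "f differentiable (at p)" "g differentiable (at p)"
  shows "(\<lambda>q. f q * g q) differentiable (at p)"
  using assms differentiable_mult by blast

lemma diff_diff:
  fixes f g :: "'a::real_normed_vector \<Rightarrow> real"
  assumes "f differentiable (at p)" "g differentiable (at p)"
  shows "(\<lambda>q. f q - g q) differentiable (at p)"
  using assms differentiable_diff by blast

definition bv :: "(nat \<Rightarrow> 'n::finite) \<Rightarrow> nat \<Rightarrow> real \<times> (real^'n)" where
  "bv e k = (0, axis (e k) 1)"

definition Dop :: "(nat \<Rightarrow> 'n::finite) \<Rightarrow> nat \<Rightarrow> (real \<times> (real^'n) \<Rightarrow> real) \<Rightarrow> real \<times> (real^'n) \<Rightarrow> real" where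
  "Dop e n g q = pderiv_dir (totder e n q) g q"

context
  fixes e :: "nat \<Rightarrow> 'n::finite" and n :: nat
  assumes bij: "bij_betw e {..n} UNIV"
begin

lemma e_inj: "k \<le> n \<Longrightarrow> j \<le> n \<Longrightarrow> e k = e j \<longleftrightarrow> k = j"
  using bij unfolding bij_betw_def inj_on_def by auto

lemma e_surj: "\<exists>k\<le>n. i = e k"
  using bij unfolding bij_betw_def by auto

lemma e_inv: "k \<le> n \<Longrightarrow> inv_into {..n} e (e k) = k"
  using bij unfolding bij_betw_def by (simp add: inv_into_f_f)

lemma totder_exp:
  "totder e n q = (1, 0) + (\<Sum>j<n. (snd q $ e (Suc j)) *\<^sub>R bv e j)"
proof -
  have "snd (totder e n q) $ i = snd ((1::real, 0::real^'n) + (\<Sum>j<n. (snd q $ e (Suc j)) *\<^sub>R bv e j)) $ i" for i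
  proof -
    obtain k where k: "k \<le> n" "i = e k" using e_surj by blast
    have "(\<Sum>j<n. (snd q $ e (Suc j)) * (axis (e j) (1::real) $ e k))
        = (\<Sum>j<n. if j = k then snd q $ e (Suc j) else 0)"
      using k(1) by (intro sum.cong) (auto simp: axis_def e_inj)
    also have "\<dots> = (if k < n then snd q $ e (Suc k) else 0)"
      by simp
    finally show ?thesis using k by (simp add: totder_def e_inv snd_sum bv_def)
  qed
  moreover have "fst (totder e n q) = fst ((1::real, 0::real^'n) + (\<Sum>j<n. (snd q $ e (Suc j)) *\<^sub>R bv e j))"
    by (simp add: totder_def fst_sum bv_def)
  ultimately show ?thesis by (simp add: prod_eq_iff vec_eq_iff)
qed

lemma Dop_exp:
  assumes "smooth_on V g" "q \<in> V"
  shows "Dop e n g q = pderiv_dir (1, 0) g q + (\<Sum>j<n. (snd q $ e (Suc j)) * pderiv_dir (bv e j) g q)"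
proof -
  have lin: "linear (frechet_derivative g (at q))" using smooth_lin[OF assms] .
  show ?thesis
    unfolding Dop_def pderiv_dir_def totder_exp
    by (simp add: linear_add[OF lin] linear_sum[OF lin] linear_scale[OF lin] o_def)
qed

lemma DER:
  fixes g :: "real \<times> (real^'n) \<Rightarrow> real"
  assumes V: "open V" "p \<in> V" and sm: "smooth_on V g" and n1: "1 \<le> n"
  shows "Dop e n g differentiable (at p)"
    and "pderiv_dir (dyn e n) (Dop e n g) p
         = pderiv_dir (bv e (n - 1)) g p + Dop e n (pderiv_dir (dyn e n) g) p"
proof -
  define c where "c j q = snd q $ e (Suc j)" for j and q :: "real \<times> (real^'n)"
  define d where "d j = pderiv_dir (bv e j) g" for j
  define d0 where "d0 = pderiv_dir (1, 0) g"
  define H where "H q = d0 q + (\<Sum>j<n. c j q * d j q)" for q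
  define H' where "H' h = frechet_derivative d0 (at p) h
      + (\<Sum>j<n. c j p * frechet_derivative (d j) (at p) h + c j h * d j p)" for h
  have bc: "bounded_linear (c j)" for j
    unfolding c_def
    by (rule bounded_linear_compose[of "\<lambda>x. x $ e (Suc j)" snd, OF bounded_linear_vec_nth bounded_linear_snd])
  have dd: "(d j has_derivative frechet_derivative (d j) (at p)) (at p)" for j
    unfolding d_def using smooth_hasder[OF smooth_deriv[OF V(1) sm] V(2)] .
  have dd0: "(d0 has_derivative frechet_derivative d0 (at p)) (at p)"
    unfolding d0_def using smooth_hasder[OF smooth_deriv[OF V(1) sm] V(2)] .
  have "(H has_derivative H') (at p)"
    unfolding H_def H'_def
    by (intro has_derivative_add dd0 has_derivative_sum has_derivative_mult
        bounded_linear_imp_has_derivative bc dd)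
  moreover have "\<forall>q\<in>V. H q = Dop e n g q"
    using Dop_exp[OF sm] unfolding H_def c_def d_def d0_def by simp
  ultimately have HD: "(Dop e n g has_derivative H') (at p)"
    using has_derivative_transform_within_open V by blast
  then show "Dop e n g differentiable (at p)" unfolding differentiable_def by blast
  have "pderiv_dir (dyn e n) (Dop e n g) p = H' (dyn e n)"
    using frechet_derivative_at[OF HD] unfolding pderiv_dir_def by simp
  also have "\<dots> = pderiv_dir (bv e (n - 1)) g p + Dop e n (pderiv_dir (dyn e n) g) p"
  proof -
    have s1: "frechet_derivative d0 (at p) (dyn e n) = pderiv_dir (1, 0) (pderiv_dir (dyn e n) g) p"
      using sym2[OF V sm] unfolding d0_def pderiv_dir_def by metis
    have s2: "frechet_derivative (d j) (at p) (dyn e n) = pderiv_dir (bv e j) (pderiv_dir (dyn e n) g) p" for j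
      using sym2[OF V sm] unfolding d_def pderiv_dir_def by metis
    have s3: "c j (dyn e n) * d j p = (if j = n - 1 then d j p else 0)" if "j < n" for j
      using that n1 unfolding c_def dyn_def by (auto simp: axis_def e_inj)
    have "(\<Sum>j<n. c j p * frechet_derivative (d j) (at p) (dyn e n) + c j (dyn e n) * d j p)
        = (\<Sum>j<n. c j p * pderiv_dir (bv e j) (pderiv_dir (dyn e n) g) p) + (\<Sum>j<n. if j = n - 1 then d j p else 0)"
      unfolding sum.distrib[symmetric] by (intro sum.cong refl) (simp add: s2 s3)
    also have "(\<Sum>j<n. if j = n - 1 then d j p else 0) = d (n - 1) p"
      using n1 by simp
    finally show ?thesis
      unfolding H'_def s1 Dop_exp[OF smooth_deriv[OF V(1) sm] V(2)]
      unfolding d_def c_def by simp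
  qed
  finally show "pderiv_dir (dyn e n) (Dop e n g) p
         = pderiv_dir (bv e (n - 1)) g p + Dop e n (pderiv_dir (dyn e n) g) p" .
qed

lemma totder_contact: "totder e n p \<in> contact_dist e n p"
  unfolding contact_dist_def totder_def by (auto simp: e_inv)

lemma dyn_contact: "dyn e n \<in> contact_dist e n p"
  unfolding contact_dist_def dyn_def by (auto simp: axis_def e_inj)

lemma pd_dm:
  fixes f g h :: "real \<times> (real^'n) \<Rightarrow> real"
  assumes "f differentiable (at p)" "g differentiable (at p)" "h differentiable (at p)"
  shows "pderiv_dir v (\<lambda>q. f q - g q * h q) p
     = pderiv_dir v f p - (g p * pderiv_dir v h p + pderiv_dir v g p * h p)"
  using pd_diff[OF assms(1) diff_mult[OF assms(2,3)]] pd_mult[OF assms(2,3)] by simp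

lemma Dop_dm:
  fixes f g h :: "real \<times> (real^'n) \<Rightarrow> real"
  assumes "f differentiable (at p)" "g differentiable (at p)" "h differentiable (at p)"
  shows "Dop e n (\<lambda>q. f q - g q * h q) p
     = Dop e n f p - (g p * Dop e n h p + Dop e n g p * h p)"
  unfolding Dop_def using pd_dm[OF assms] .

lemma core:
  fixes \<psi> :: "real \<times> (real^'n) \<Rightarrow> real \<times> (real^'n)"
  assumes V: "open V" and n2: "2 \<le> n" and sm: "smooth_on V \<psi>"
    and ct: "\<forall>p\<in>V. \<forall>v\<in>contact_dist e n p. frechet_derivative \<psi> (at p) v \<in> contact_dist e n (\<psi> p)"
    and inj: "\<forall>p\<in>V. inj (frechet_derivative \<psi> (at p))"
    and p: "p \<in> V"
  shows "fst (frechet_derivative \<psi> (at p) (dyn e n)) = 0"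
proof -
  define X where "X q = fst (\<psi> q)" for q
  define Y where "Y k q = snd (\<psi> q) $ e k" for k q
  define d where "d = dyn e n"
  define E where "E = bv e (n - 1)"
  have bY: "bounded_linear (\<lambda>x::real \<times> (real^'n). snd x $ e k)" for k
    by (rule bounded_linear_compose[of "\<lambda>x. x $ e k" snd, OF bounded_linear_vec_nth bounded_linear_snd])
  have smX: "smooth_on V X" unfolding X_def by (rule smooth_linear[OF bounded_linear_fst sm])
  have smY: "smooth_on V (Y k)" for k unfolding Y_def by (rule smooth_linear[OF bY sm])
  have pX: "pderiv_dir v X q = fst (frechet_derivative \<psi> (at q) v)" if "q \<in> V" for v q
    unfolding X_def using pd_lin_comp[OF bounded_linear_fst smooth_diff[OF sm that]]
    by (simp add: pderiv_dir_def)
  have pY: "pderiv_dir v (Y k) q = snd (frechet_derivative \<psi> (at q) v) $ e k" if "q \<in> V" for v q k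
    unfolding Y_def using pd_lin_comp[OF bY smooth_diff[OF sm that]]
    by (simp add: pderiv_dir_def)
  have eqv: "pderiv_dir v (Y k) q = Y (Suc k) q * pderiv_dir v X q"
    if "q \<in> V" "v \<in> contact_dist e n q" "k < n" for q v k
    using ct that pX[OF that(1)] pY[OF that(1)] unfolding contact_dist_def Y_def
    by fastforce
  have eqD: "Dop e n (Y k) q = Y (Suc k) q * Dop e n X q" if "q \<in> V" "k < n" for q k
    unfolding Dop_def using eqv[OF that(1) totder_contact that(2)] .
  have eqd: "pderiv_dir d (Y k) q = Y (Suc k) q * pderiv_dir d X q" if "q \<in> V" "k < n" for q k
    unfolding d_def using eqv[OF that(1) dyn_contact that(2)] .
  have n1: "1 \<le> n" using n2 by simp
  note dX = smooth_diff[OF smX]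
  note dY = smooth_diff[OF smY]
  have dpX: "pderiv_dir v X differentiable (at q)" if "q \<in> V" for v q
    using smooth_diff[OF smooth_deriv[OF V smX] that] .
  have dpY: "pderiv_dir v (Y k) differentiable (at q)" if "q \<in> V" for v q k
    using smooth_diff[OF smooth_deriv[OF V smY] that] .
  have star: "pderiv_dir E (Y k) q = Y (Suc k) q * pderiv_dir E X q
      + pderiv_dir d (Y (Suc k)) q * Dop e n X q - Dop e n (Y (Suc k)) q * pderiv_dir d X q"
    if q: "q \<in> V" and k: "k < n" for q k
  proof -
    have h1: "pderiv_dir d (\<lambda>r. Dop e n (Y k) r - Y (Suc k) r * Dop e n X r) q = 0"
      using eqD k by (intro pd_zero[OF V q]) auto
    have h1': "pderiv_dir d (\<lambda>r. Dop e n (Y k) r - Y (Suc k) r * Dop e n X r) q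
        = (pderiv_dir E (Y k) q + Dop e n (pderiv_dir d (Y k)) q)
          - (Y (Suc k) q * (pderiv_dir E X q + Dop e n (pderiv_dir d X) q)
             + pderiv_dir d (Y (Suc k)) q * Dop e n X q)"
      unfolding pd_dm[OF DER(1)[OF V q smY n1] dY[OF q] DER(1)[OF V q smX n1]]
      unfolding d_def E_def DER(2)[OF V q smY n1] DER(2)[OF V q smX n1] ..
    have h2: "Dop e n (\<lambda>r. pderiv_dir d (Y k) r - Y (Suc k) r * pderiv_dir d X r) q = 0"
      unfolding Dop_def using eqd k by (intro pd_zero[OF V q]) auto
    have h2': "Dop e n (\<lambda>r. pderiv_dir d (Y k) r - Y (Suc k) r * pderiv_dir d X r) q
       = Dop e n (pderiv_dir d (Y k)) q - (Y (Suc k) q * Dop e n (pderiv_dir d X) q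
          + Dop e n (Y (Suc k)) q * pderiv_dir d X q)"
      by (rule Dop_dm[OF dpY[OF q] dY[OF q] dpX[OF q]])
    show ?thesis using h1 h1' h2 h2' unfolding distrib_left by linarith
  qed
  have stepB: "pderiv_dir E (Y k) q = Y (Suc k) q * pderiv_dir E X q"
    if q: "q \<in> V" and k: "Suc k < n" for q k
  proof -
    have "pderiv_dir d (Y (Suc k)) q * Dop e n X q = Dop e n (Y (Suc k)) q * pderiv_dir d X q"
      using eqd[OF q k] eqD[OF q k] by (simp add: mult_ac)
    then show ?thesis using star[OF q] k by simp
  qed
  define m where "m = n - 2"
  have m1: "Suc m = n - 1" and m2: "Suc (Suc m) = n" and m3: "Suc m < n" and m4: "m < n"
    using n2 unfolding m_def by auto
  have c1: "pderiv_dir d (\<lambda>r. pderiv_dir E (Y m) r - Y (Suc m) r * pderiv_dir E X r) p = 0"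
    using stepB m3 by (intro pd_zero[OF V p]) auto
  have c1': "pderiv_dir d (\<lambda>r. pderiv_dir E (Y m) r - Y (Suc m) r * pderiv_dir E X r) p
     = pderiv_dir d (pderiv_dir E (Y m)) p - (Y (Suc m) p * pderiv_dir d (pderiv_dir E X) p
        + pderiv_dir d (Y (Suc m)) p * pderiv_dir E X p)"
    by (rule pd_dm[OF dpY[OF p] dY[OF p] dpX[OF p]])
  have c2: "pderiv_dir E (\<lambda>r. pderiv_dir d (Y m) r - Y (Suc m) r * pderiv_dir d X r) p = 0"
    using eqd m4 by (intro pd_zero[OF V p]) auto
  have c2': "pderiv_dir E (\<lambda>r. pderiv_dir d (Y m) r - Y (Suc m) r * pderiv_dir d X r) p
     = pderiv_dir E (pderiv_dir d (Y m)) p - (Y (Suc m) p * pderiv_dir E (pderiv_dir d X) p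
        + pderiv_dir E (Y (Suc m)) p * pderiv_dir d X p)"
    by (rule pd_dm[OF dpY[OF p] dY[OF p] dpX[OF p]])
  have sy1: "pderiv_dir d (pderiv_dir E (Y m)) p = pderiv_dir E (pderiv_dir d (Y m)) p"
    by (rule sym2[OF V p smY])
  have sy2: "pderiv_dir d (pderiv_dir E X) p = pderiv_dir E (pderiv_dir d X) p"
    by (rule sym2[OF V p smX])
  have c3: "pderiv_dir d (Y (Suc m)) p * pderiv_dir E X p = pderiv_dir E (Y (Suc m)) p * pderiv_dir d X p"
    using c1 c1'[unfolded sy1 sy2] c2 c2' by linarith
  have st: "pderiv_dir E (Y (Suc m)) p = Y n p * pderiv_dir E X p
      + pderiv_dir d (Y n) p * Dop e n X p - Dop e n (Y n) p * pderiv_dir d X p"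
    using star[OF p m3] m2 by simp
  have ed: "pderiv_dir d (Y (Suc m)) p = Y n p * pderiv_dir d X p"
    using eqd[OF p m3] m2 by simp
  have key: "pderiv_dir d X p * (pderiv_dir d (Y n) p * Dop e n X p - Dop e n (Y n) p * pderiv_dir d X p) = 0"
  proof -
    have "Y n p * pderiv_dir d X p * pderiv_dir E X p = (Y n p * pderiv_dir E X p
      + (pderiv_dir d (Y n) p * Dop e n X p - Dop e n (Y n) p * pderiv_dir d X p)) * pderiv_dir d X p"
      using c3 st ed by simp
    then show ?thesis by (simp add: algebra_simps) (metis mult.commute)
  qed
  show ?thesis
  proof (rule ccontr)
    define L where "L = frechet_derivative \<psi> (at p)"
    define a where "a = pderiv_dir d X p"
    define b where "b = Dop e n X p"
    assume ne: "fst (frechet_derivative \<psi> (at p) (dyn e n)) \<noteq> 0"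
    then have a0: "a \<noteq> 0" unfolding a_def d_def pX[OF p] .
    have lin: "linear L" unfolding L_def by (rule smooth_lin[OF sm p])
    define w where "w = a *\<^sub>R totder e n p - b *\<^sub>R d"
    have Lw: "L w = a *\<^sub>R L (totder e n p) - b *\<^sub>R L d"
      unfolding w_def by (simp add: linear_diff[OF lin] linear_scale[OF lin])
    have fT: "fst (L (totder e n p)) = b" unfolding L_def b_def Dop_def pX[OF p] ..
    have fd: "fst (L d) = a" unfolding L_def a_def pX[OF p] ..
    have sT: "snd (L (totder e n p)) $ e k = Dop e n (Y k) p" for k
      unfolding L_def Dop_def pY[OF p] ..
    have sd: "snd (L d) $ e k = pderiv_dir d (Y k) p" for k
      unfolding L_def pY[OF p] ..
    have key2: "pderiv_dir d (Y n) p * b - Dop e n (Y n) p * a = 0"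
      using key a0 unfolding a_def b_def by simp
    have "snd (L w) $ i = 0" for i
    proof -
      obtain k where k: "k \<le> n" "i = e k" using e_surj by blast
      have "snd (L w) $ i = a * Dop e n (Y k) p - b * pderiv_dir d (Y k) p"
        using k by (simp add: Lw sT sd)
      also have "\<dots> = 0"
      proof (cases "k < n")
        case True
        then show ?thesis using eqD[OF p True] eqd[OF p True] unfolding a_def b_def
          by (simp add: mult_ac)
      next
        case False
        then have "k = n" using k by simp
        then show ?thesis using key2 by (simp add: mult_ac)
      qed
      finally show ?thesis .
    qed
    moreover have "fst (L w) = 0" by (simp add: Lw fT fd)
    ultimately have "L w = 0" by (simp add: prod_eq_iff vec_eq_iff)
    moreover have "L 0 = 0" using linear_0[OF lin] .
    ultimately have "w = 0" using inj p unfolding L_def inj_def by metis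
    moreover have "fst w = a" unfolding w_def d_def by (simp add: totder_def dyn_def)
    ultimately show False using a0 by simp
  qed
qed

lemma contact_span: "contact_dist e n p = span {totder e n p, dyn e n}"
proof
  show "span {totder e n p, dyn e n} \<subseteq> contact_dist e n p"
  proof (rule span_minimal)
    show "{totder e n p, dyn e n} \<subseteq> contact_dist e n p"
      using totder_contact dyn_contact by auto
    show "subspace (contact_dist e n p)"
      unfolding subspace_def contact_dist_def zero_prod_def
      by (simp add: algebra_simps split_beta)
  qed
  show "contact_dist e n p \<subseteq> span {totder e n p, dyn e n}"
  proof
    fix x assume x: "x \<in> contact_dist e n p"
    obtain dx dy where xe: "x = (dx, dy)" by (cases x)
    have c: "\<forall>k<n. dy $ e k = snd p $ e (Suc k) * dx" using x xe unfolding contact_dist_def by auto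
    have "x = dx *\<^sub>R totder e n p + (dy $ e n) *\<^sub>R dyn e n"
    proof -
      have comp: "dy $ i = (dx *\<^sub>R snd (totder e n p) + (dy $ e n) *\<^sub>R snd (dyn e n)) $ i" for i
      proof -
        obtain k where k: "k \<le> n" "i = e k" using e_surj by blast
        show ?thesis
        proof (cases "k < n")
          case True
          have t: "snd (totder e n p) $ e k = snd p $ e (Suc k)"
            using True k(1) by (simp add: totder_def e_inv Let_def)
          have a: "axis (e n) (1::real) $ e k = 0"
            using True k(1) e_inj[of n k] by (simp add: axis_def)
          show ?thesis using k(2) c True t a by (simp add: dyn_def mult.commute)
        next
          case False
          then have kn: "k = n" using k by simp
          have t: "snd (totder e n p) $ e n = 0"
            by (simp add: totder_def e_inv Let_def)
          show ?thesis using k(2) kn t by (simp add: dyn_def)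
        qed
      qed
      then have "dy = dx *\<^sub>R snd (totder e n p) + (dy $ e n) *\<^sub>R snd (dyn e n)"
        by (intro vec_eq_iff[THEN iffD2] allI) (rule comp)
      then show ?thesis using xe by (simp add: totder_def dyn_def prod_eq_iff)
    qed
    also have "\<dots> \<in> span {totder e n p, dyn e n}"
      by (intro span_add span_scale span_base) auto
    finally show "x \<in> span {totder e n p, dyn e n}" .
  qed
qed

end

lemma phi_der:
  assumes "(\<psi> has_derivative \<psi>') (at p)" "(\<mu> has_derivative \<mu>') (at p)"
  shows "((\<lambda>(p, z). (\<psi> p, \<alpha> * z + \<mu> p)) has_derivative
          (\<lambda>(v, w). (\<psi>' v, \<alpha> * w + \<mu>' v))) (at (p, z::real))"
proof -
  have f: "(fst has_derivative fst) (at (p, z))"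
    by (rule bounded_linear_imp_has_derivative[OF bounded_linear_fst])
  have sn: "(snd has_derivative snd) (at (p, z))"
    by (rule bounded_linear_imp_has_derivative[OF bounded_linear_snd])
  have a: "((\<lambda>x. \<psi> (fst x)) has_derivative (\<lambda>h. \<psi>' (fst h))) (at (p, z))"
    using has_derivative_compose[OF f, of \<psi> \<psi>'] assms(1) by simp
  have b: "((\<lambda>x. \<mu> (fst x)) has_derivative (\<lambda>h. \<mu>' (fst h))) (at (p, z))"
    using has_derivative_compose[OF f, of \<mu> \<mu>'] assms(2) by simp
  have c: "((\<lambda>x. \<alpha> * snd x + \<mu> (fst x)) has_derivative (\<lambda>h. \<alpha> * snd h + \<mu>' (fst h))) (at (p, z))"
    by (intro has_derivative_add has_derivative_mult_right sn b)
  have "((\<lambda>x. (\<psi> (fst x), \<alpha> * snd x + \<mu> (fst x))) has_derivative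
        (\<lambda>h. (\<psi>' (fst h), \<alpha> * snd h + \<mu>' (fst h)))) (at (p, z))"
    by (rule has_derivative_Pair[OF a c])
  then show ?thesis by (simp add: case_prod_beta')
qed

theorem lemma2p2:
  fixes n :: nat and e :: "nat \<Rightarrow> 'n::finite"
    and f1 f2 :: "real \<times> (real^'n) \<Rightarrow> real"
    and W1 W2 V :: "(real \<times> (real^'n)) set"
    and \<psi> :: "real \<times> (real^'n) \<Rightarrow> real \<times> (real^'n)"
    and \<mu> :: "real \<times> (real^'n) \<Rightarrow> real"
    and \<alpha> :: real
  assumes "n \<ge> 3" and "CARD('n) = n + 1" and "bij_betw e {..n} UNIV"
    and "open W1" and "open W2"
    and "smooth_on W1 f1" and "smooth_on W2 f2"
    and "\<forall>p\<in>W1. pderiv_dir (dyn e n) (pderiv_dir (dyn e n) f1) p \<noteq> 0"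
    and "\<forall>p\<in>W2. pderiv_dir (dyn e n) (pderiv_dir (dyn e n) f2) p \<noteq> 0"
    and "open V" and "V \<subseteq> W1" and "\<psi> ` V \<subseteq> W2"
    and "local_diffeo_on V \<psi>" and "smooth_on V \<mu>" and "\<alpha> \<noteq> 0"
    and "local_diffeo_on (V \<times> UNIV) (\<lambda>(p, z). (\<psi> p, \<alpha> * z + \<mu> p))"
    and "\<forall>q\<in>V \<times> UNIV.
           frechet_derivative (\<lambda>(p, z). (\<psi> p, \<alpha> * z + \<mu> p)) (at q) ` Dist e n f1 q
           = Dist e n f2 ((\<lambda>(p, z). (\<psi> p, \<alpha> * z + \<mu> p)) q)"
  shows "contact_transformation_on e n V \<psi> \<and> (\<forall>p\<in>V. pderiv_dir (dyn e n) \<mu> p = 0)"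
proof -
  note bij = assms(3)
  note V = assms(10)
  have ld: "local_diffeo_on V \<psi>" by (rule assms(13))
  then have smp: "smooth_on V \<psi>" and bj: "\<forall>x\<in>V. bij (frechet_derivative \<psi> (at x))"
    unfolding local_diffeo_on_def by auto
  note smu = assms(14)
  define \<Phi> where "\<Phi> = (\<lambda>(p, z). (\<psi> p, \<alpha> * z + \<mu> p))"
  have key: "span {frechet_derivative \<psi> (at p) (totder e n p), frechet_derivative \<psi> (at p) (dyn e n)}
        = span {totder e n (\<psi> p), dyn e n}
      \<and> (frechet_derivative \<psi> (at p) (dyn e n), frechet_derivative \<mu> (at p) (dyn e n))
        \<in> span {(totder e n (\<psi> p), f2 (\<psi> p)), (dyn e n, 0)}" if p: "p \<in> V" for p
  proof -
    let ?P = "frechet_derivative \<psi> (at p)"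
    let ?M = "frechet_derivative \<mu> (at p)"
    define L where "L = (\<lambda>(v, w). (?P v, \<alpha> * w + ?M v))"
    have hd: "(\<Phi> has_derivative L) (at (p, 0))"
      unfolding \<Phi>_def L_def
      by (rule phi_der[OF smooth_hasder[OF smp p] smooth_hasder[OF smu p]])
    have linL: "linear L" using hd has_derivative_linear by blast
    have FL: "frechet_derivative \<Phi> (at (p, 0)) = L" using frechet_derivative_at[OF hd] by simp
    have h: "L ` Dist e n f1 (p, 0) = Dist e n f2 (\<Phi> (p, 0))"
    proof -
      have "frechet_derivative \<Phi> (at (p, 0)) ` Dist e n f1 (p, 0) = Dist e n f2 (\<Phi> (p, 0))"
        using assms(17) p unfolding \<Phi>_def by blast
      then show ?thesis unfolding FL .
    qed
    have h2: "span {L (totder e n p, f1 p), L (dyn e n, 0)}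
        = span {(totder e n (\<psi> p), f2 (\<psi> p)), (dyn e n, 0)}"
      using h unfolding Dist_def Xfield_def Yfield_def \<Phi>_def span_linear_image[OF linL, symmetric]
      by simp
    have LT: "L (totder e n p, f1 p) = (?P (totder e n p), \<alpha> * f1 p + ?M (totder e n p))"
      unfolding L_def by simp
    have LD: "L (dyn e n, 0) = (?P (dyn e n), ?M (dyn e n))"
      unfolding L_def by simp
    have "fst ` span {L (totder e n p, f1 p), L (dyn e n, 0)}
        = fst ` span {(totder e n (\<psi> p), f2 (\<psi> p)), (dyn e n, 0)}"
      using h2 by simp
    then have "span (fst ` {L (totder e n p, f1 p), L (dyn e n, 0)})
        = span (fst ` {(totder e n (\<psi> p), f2 (\<psi> p)), (dyn e n, 0)})"
      unfolding span_linear_image[OF linear_fst] .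
    then have a: "span {?P (totder e n p), ?P (dyn e n)} = span {totder e n (\<psi> p), dyn e n}"
      unfolding LT LD by simp
    have "L (dyn e n, 0) \<in> span {(totder e n (\<psi> p), f2 (\<psi> p)), (dyn e n, 0)}"
      using h2 span_base[of "L (dyn e n, 0)" "{L (totder e n p, f1 p), L (dyn e n, 0)}"] by auto
    then show ?thesis using a LD by simp
  qed
  have cimg: "frechet_derivative \<psi> (at p) ` contact_dist e n p = contact_dist e n (\<psi> p)"
    if p: "p \<in> V" for p
  proof -
    have lin: "linear (frechet_derivative \<psi> (at p))" by (rule smooth_lin[OF smp p])
    show ?thesis
      unfolding contact_span[OF bij] span_linear_image[OF lin, symmetric]
      using key[OF p] by simp
  qed
  have ct: "contact_transformation_on e n V \<psi>"
    unfolding contact_transformation_on_def using ld cimg by blast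
  have fst0: "fst (frechet_derivative \<psi> (at p) (dyn e n)) = 0" if p: "p \<in> V" for p
  proof (rule core[OF bij V _ smp _ _ p])
    show "2 \<le> n" using assms(1) by simp
    show "\<forall>p\<in>V. \<forall>v\<in>contact_dist e n p. frechet_derivative \<psi> (at p) v \<in> contact_dist e n (\<psi> p)"
      using cimg by blast
    show "\<forall>p\<in>V. inj (frechet_derivative \<psi> (at p))" using bj bij_is_inj by blast
  qed
  have "pderiv_dir (dyn e n) \<mu> p = 0" if p: "p \<in> V" for p
  proof -
    let ?A = "(totder e n (\<psi> p), f2 (\<psi> p))"
    let ?B = "(dyn e n, 0::real)"
    have "(frechet_derivative \<psi> (at p) (dyn e n), frechet_derivative \<mu> (at p) (dyn e n)) \<in> span {?A, ?B}"
      using key[OF p] by blast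
    then obtain a b where ab: "(frechet_derivative \<psi> (at p) (dyn e n), frechet_derivative \<mu> (at p) (dyn e n))
        - a *\<^sub>R ?A = b *\<^sub>R ?B"
      unfolding span_insert span_singleton by auto
    have "fst (frechet_derivative \<psi> (at p) (dyn e n)) - a = 0"
      using arg_cong[OF ab, of "\<lambda>x. fst (fst x)"] by (simp add: totder_def dyn_def)
    then have a0: "a = 0" using fst0[OF p] by simp
    have "frechet_derivative \<mu> (at p) (dyn e n) - a * f2 (\<psi> p) = 0"
      using arg_cong[OF ab, of snd] by simp
    then show ?thesis using a0 unfolding pderiv_dir_def by simp
  qed
  then show ?thesis using ct by blast
qed

end
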